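(* Let $(X,T)$ be a topological dynamical system and $\pi:(X,T)\to(X_{eq},T_{eq})$ the factor map onto its maximal equicontinuous factor. If $(X,T)$ is block $\mathcal{F}_t$-sensitive then $\pi$ is not proximal.
   Context: A topological dynamical system $(X,T)$: compact metric space $(X,d)$, $T$ continuous surjective. $(X,T)$ is block $\mathcal{F}_t$-sensitive if there is $\delta>0$ such that for each $x\in X$, every neighborhood $U$ of $x$ and every $l\in\mathbb{N}$ there is $y_l\in U$ such that $\{n\in\mathbb{Z}_+: d(T^nx,T^ny_l)>\delta\}$ contains $\{m+1,\dots,m+l\}$ for some $m\in\mathbb{N}$. $X_{eq}$ is the maximal equicontinuous factor (every equicontinuous factor of $(X,T)$ is a factor of it). A pair $(x,y)$ is proximal if $\inf_n d(T^nx,T^ny)=0$; a factor map $\pi$ is proximal if every pair $(x,y)$ with $\pi(x)=\pi(y)$ is proximal. *)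

theory Defs
  imports "HOL-Analysis.Analysis" "HOL-Analysis.Function_Metric"
begin

definition tds :: "'a::metric_space set \<Rightarrow> ('a \<Rightarrow> 'a) \<Rightarrow> bool" where
  "tds X T \<longleftrightarrow> X \<noteq> {} \<and> compact X \<and> continuous_on X T \<and> T ` X = X"

definition factor_map ::
  "'a::metric_space set \<Rightarrow> ('a \<Rightarrow> 'a) \<Rightarrow> 'b::metric_space set \<Rightarrow> ('b \<Rightarrow> 'b) \<Rightarrow> ('a \<Rightarrow> 'b) \<Rightarrow> bool" where
  "factor_map X T Y S \<pi> \<longleftrightarrow> tds X T \<and> tds Y S \<and> continuous_on X \<pi> \<and> \<pi> ` X = Y
     \<and> (\<forall>x\<in>X. \<pi> (T x) = S (\<pi> x))"

definition equicontinuous_sys :: "'a::metric_space set \<Rightarrow> ('a \<Rightarrow> 'a) \<Rightarrow> bool" where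
  "equicontinuous_sys X T \<longleftrightarrow> (\<forall>e>0. \<exists>d>0. \<forall>x\<in>X. \<forall>y\<in>X.
     dist x y < d \<longrightarrow> (\<forall>n. dist ((T ^^ n) x) ((T ^^ n) y) < e))"

text \<open>Every compact metric space embeds in the Hilbert-cube-like space nat => real, so
  quantifying over factors living in that type covers all equicontinuous factors up to
  conjugacy.\<close>
definition max_equicontinuous_factor ::
  "'a::metric_space set \<Rightarrow> ('a \<Rightarrow> 'a) \<Rightarrow> 'b::metric_space set \<Rightarrow> ('b \<Rightarrow> 'b) \<Rightarrow> ('a \<Rightarrow> 'b) \<Rightarrow> bool" where
  "max_equicontinuous_factor X T Y S \<pi> \<longleftrightarrow>
     factor_map X T Y S \<pi> \<and> equicontinuous_sys Y S \<and>
     (\<forall>(Z :: (nat \<Rightarrow> real) set) R \<rho>.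
        factor_map X T Z R \<rho> \<and> equicontinuous_sys Z R \<longrightarrow>
        (\<exists>\<psi>. factor_map Y S Z R \<psi> \<and> (\<forall>x\<in>X. \<rho> x = \<psi> (\<pi> x))))"

definition proximal_pair :: "('a::metric_space \<Rightarrow> 'a) \<Rightarrow> 'a \<Rightarrow> 'a \<Rightarrow> bool" where
  "proximal_pair T x y \<longleftrightarrow> (INF n. dist ((T ^^ n) x) ((T ^^ n) y)) = 0"

definition proximal_factor_map :: "'a::metric_space set \<Rightarrow> ('a \<Rightarrow> 'a) \<Rightarrow> ('a \<Rightarrow> 'b) \<Rightarrow> bool" where
  "proximal_factor_map X T \<pi> \<longleftrightarrow> (\<forall>x\<in>X. \<forall>y\<in>X. \<pi> x = \<pi> y \<longrightarrow> proximal_pair T x y)"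

definition block_Ft_sensitive :: "'a::metric_space set \<Rightarrow> ('a \<Rightarrow> 'a) \<Rightarrow> bool" where
  "block_Ft_sensitive X T \<longleftrightarrow> (\<exists>\<delta>>0. \<forall>x\<in>X. \<forall>U. open U \<and> x \<in> U \<longrightarrow>
     (\<forall>l::nat. l \<ge> 1 \<longrightarrow> (\<exists>y\<in>U \<inter> X. \<exists>m::nat. m \<ge> 1 \<and>
        {m+1..m+l} \<subseteq> {n. dist ((T ^^ n) x) ((T ^^ n) y) > \<delta>})))"

end

theory Submission imports Defs begin
lemma fp_in: "T ` X \<subseteq> X \<Longrightarrow> x \<in> X \<Longrightarrow> (T^^n) x \<in> X"
  by (induction n) auto

lemma fp_cont: "continuous_on X T \<Longrightarrow> T ` X \<subseteq> X \<Longrightarrow> continuous_on X (T^^n)"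
proof (induction n)
  case 0 then show ?case by (simp add: continuous_on_id)
next
  case (Suc n)
  have "(T^^n) ` X \<subseteq> X" using fp_in[OF Suc.prems(2)] by auto
  then have "continuous_on ((T^^n) ` X) T" using Suc.prems(1) continuous_on_subset by blast
  moreover have "continuous_on X (T^^n)" using Suc by blast
  ultimately have "continuous_on X (T \<circ> (T^^n))" by (rule continuous_on_compose[rotated])
  then show ?case by simp
qed

lemma fp_comm: "\<forall>x\<in>X. \<pi> (T x) = S (\<pi> x) \<Longrightarrow> T ` X \<subseteq> X \<Longrightarrow> x \<in> X \<Longrightarrow> \<pi> ((T^^n) x) = (S^^n) (\<pi> x)"
proof (induction n)
  case 0 then show ?case by simp
next
  case (Suc n)
  have "(T^^n) x \<in> X" using fp_in[OF Suc.prems(2,3)] .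
  then have "\<pi> (T ((T^^n) x)) = S (\<pi> ((T^^n) x))" using Suc.prems(1) by blast
  then show ?case using Suc.IH[OF Suc.prems] by simp
qed
theorem proposition4p2:
  fixes X :: "'a::metric_space set" and T :: "'a \<Rightarrow> 'a"
    and Xeq :: "'b::metric_space set" and Teq :: "'b \<Rightarrow> 'b" and \<pi> :: "'a \<Rightarrow> 'b"
  assumes "tds X T"
    and "max_equicontinuous_factor X T Xeq Teq \<pi>"
    and "block_Ft_sensitive X T"
  shows "\<not> proximal_factor_map X T \<pi>"
proof
  assume prox: "proximal_factor_map X T \<pi>"
  have X: "X \<noteq> {}" "compact X" "continuous_on X T" "T ` X \<subseteq> X"
    using assms(1) unfolding tds_def by auto
  have fm: "factor_map X T Xeq Teq \<pi>" and eq: "equicontinuous_sys Xeq Teq"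
    using assms(2) unfolding max_equicontinuous_factor_def by auto
  have pic: "continuous_on X \<pi>" and piX: "\<pi> ` X = Xeq" and comm: "\<forall>x\<in>X. \<pi> (T x) = Teq (\<pi> x)"
    using fm unfolding factor_map_def by auto
  obtain \<delta> where d0: "\<delta> > 0" and sens: "\<forall>x\<in>X. \<forall>U. open U \<and> x \<in> U \<longrightarrow>
     (\<forall>l::nat. l \<ge> 1 \<longrightarrow> (\<exists>y\<in>U \<inter> X. \<exists>m::nat. m \<ge> 1 \<and>
        {m+1..m+l} \<subseteq> {n. dist ((T ^^ n) x) ((T ^^ n) y) > \<delta>}))"
    using assms(3) unfolding block_Ft_sensitive_def by blast
  obtain x where xX: "x \<in> X" using X(1) by blast
  have "\<forall>k::nat. \<exists>y m. y \<in> ball x (1/(real k+1)) \<inter> X \<and>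
        {m+1..m+(k+1)} \<subseteq> {n. dist ((T ^^ n) x) ((T ^^ n) y) > \<delta>}"
  proof
    fix k :: nat
    have "open (ball x (1/(real k+1)))" "x \<in> ball x (1/(real k+1))" by auto
    then show "\<exists>y m. y \<in> ball x (1/(real k+1)) \<inter> X \<and>
        {m+1..m+(k+1)} \<subseteq> {n. dist ((T ^^ n) x) ((T ^^ n) y) > \<delta>}"
    proof -
      have o: "open (ball x (1/(real k+1)))" "x \<in> ball x (1/(real k+1))" by auto
      have "\<exists>y\<in>ball x (1/(real k+1)) \<inter> X. \<exists>m::nat. m \<ge> 1 \<and> {m+1..m+(k+1)} \<subseteq> {n. dist ((T ^^ n) x) ((T ^^ n) y) > \<delta>}"
        using sens xX o le_add2[of 1 k] by (simp only: add.commute[of 1 k])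
      then show ?thesis by blast
    qed
  qed
  from choice[OF this] obtain y where y: "\<forall>k. \<exists>m. y k \<in> ball x (1/(real k+1)) \<inter> X \<and>
        {m+1..m+(k+1)} \<subseteq> {n. dist ((T ^^ n) x) ((T ^^ n) (y k)) > \<delta>}" by blast
  from choice[OF y] obtain m where ym0: "\<forall>k. y k \<in> ball x (1/(real k+1)) \<inter> X \<and>
        {m k+1..m k+(k+1)} \<subseteq> {n. dist ((T ^^ n) x) ((T ^^ n) (y k)) > \<delta>}" by blast
  have ym: "\<And>k. y k \<in> ball x (1/(real k+1)) \<inter> X"
    "\<And>k. {m k+1..m k+(k+1)} \<subseteq> {n. dist ((T ^^ n) x) ((T ^^ n) (y k)) > \<delta>}"
    using ym0 by blast+
  define p where "p k = (T^^(m k + 1)) x" for k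
  define q where "q k = (T^^(m k + 1)) (y k)" for k
  have pq: "(p k, q k) \<in> X \<times> X" for k
  proof -
    have "p k \<in> X" unfolding p_def by (rule fp_in[OF X(4) xX])
    moreover have "y k \<in> X" using ym(1)[of k] by blast
    then have "q k \<in> X" unfolding q_def by (rule fp_in[OF X(4)])
    ultimately show ?thesis by blast
  qed
  have "seq_compact (X \<times> X)" using X(2) compact_Times compact_imp_seq_compact by blast
  then obtain ab r where abin: "ab \<in> X \<times> X" and r: "strict_mono r"
    and lim: "((\<lambda>k. (p k, q k)) \<circ> r) \<longlonglongrightarrow> ab"
    unfolding seq_compact_def using pq by (meson comp_def)
  obtain a b where ab: "ab = (a,b)" by fastforce
  have aX: "a \<in> X" and bX: "b \<in> X" using abin ab by auto
  have la: "(\<lambda>j. p (r j)) \<longlonglongrightarrow> a" using tendsto_fst[OF lim] ab by (simp add: o_def)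
  have lb: "(\<lambda>j. q (r j)) \<longlonglongrightarrow> b" using tendsto_snd[OF lim] ab by (simp add: o_def)
  have pX: "p k \<in> X" and qX: "q k \<in> X" for k using pq[of k] by auto
  have sep: "\<delta> \<le> dist ((T^^n) a) ((T^^n) b)" for n
  proof -
    have c: "continuous_on X (T^^n)" using fp_cont X by blast
    have "(\<lambda>j. (T^^n) (p (r j))) \<longlonglongrightarrow> (T^^n) a"
      by (rule continuous_on_tendsto_compose[OF c la aX]) (simp add: pX)
    moreover have "(\<lambda>j. (T^^n) (q (r j))) \<longlonglongrightarrow> (T^^n) b"
      by (rule continuous_on_tendsto_compose[OF c lb bX]) (simp add: qX)
    ultimately have L: "(\<lambda>j. dist ((T^^n) (p (r j))) ((T^^n) (q (r j)))) \<longlonglongrightarrow> dist ((T^^n) a) ((T^^n) b)"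
      by (rule tendsto_dist)
    have "eventually (\<lambda>j. \<delta> \<le> dist ((T^^n) (p (r j))) ((T^^n) (q (r j)))) sequentially"
    proof (rule eventually_sequentiallyI[of n])
      fix j assume "n \<le> j"
      then have "n \<le> r j" using seq_suble[OF r, of j] by linarith
      then have "n + (m (r j) + 1) \<in> {m (r j)+1..m (r j)+(r j+1)}" by auto
      then have "dist ((T ^^ (n + (m (r j) + 1))) x) ((T ^^ (n + (m (r j) + 1))) (y (r j))) > \<delta>"
        using ym(2) by blast
      then show "\<delta> \<le> dist ((T^^n) (p (r j))) ((T^^n) (q (r j)))"
        unfolding p_def q_def by (simp only: funpow_add o_apply less_imp_le)
    qed
    then show ?thesis using L tendsto_lowerbound by fastforce
  qed
  have same: "\<pi> a = \<pi> b"
  proof -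
    have that_e: "dist (\<pi> a) (\<pi> b) \<le> e" if e: "e > 0" for e
    proof -
      obtain d where d: "d > 0" and dd: "\<forall>u\<in>Xeq. \<forall>v\<in>Xeq.
        dist u v < d \<longrightarrow> (\<forall>n. dist ((Teq ^^ n) u) ((Teq ^^ n) v) < e)"
        using eq e unfolding equicontinuous_sys_def by blast
      obtain \<eta> where \<eta>: "\<eta> > 0" and h: "\<forall>z\<in>X. dist z x < \<eta> \<longrightarrow> dist (\<pi> z) (\<pi> x) < d"
        using pic xX d unfolding continuous_on_iff by blast
      obtain K0 :: nat where K0: "inverse (real (Suc K0)) < \<eta>" using reals_Archimedean[OF \<eta>] by blast
      define K where "K = K0"
      have K: "1 / (real K + 1) < \<eta>" using K0 unfolding K_def by (simp add: inverse_eq_divide add.commute)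
      have ev: "dist (\<pi> (p k)) (\<pi> (q k)) < e" if "k \<ge> K" for k
      proof -
        have "1/(real k+1) \<le> 1/(real K+1)" using that by (simp add: frac_le)
        then have "dist (y k) x < \<eta>" using ym(1)[of k] K by (simp add: dist_commute)
        then have "dist (\<pi> (y k)) (\<pi> x) < d" using h ym(1)[of k] by blast
        then have "dist (\<pi> x) (\<pi> (y k)) < d" by (simp add: dist_commute)
        moreover have "\<pi> x \<in> Xeq" "\<pi> (y k) \<in> Xeq" using piX xX ym(1)[of k] by auto
        ultimately have "dist ((Teq^^(m k+1)) (\<pi> x)) ((Teq^^(m k+1)) (\<pi> (y k))) < e"
          using dd by blast
        moreover have "\<pi> (p k) = (Teq^^(m k+1)) (\<pi> x)"
          unfolding p_def using fp_comm[OF comm X(4) xX] by blast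
        moreover have "\<pi> (q k) = (Teq^^(m k+1)) (\<pi> (y k))"
          unfolding q_def using fp_comm[OF comm X(4)] ym(1)[of k] by blast
        ultimately show ?thesis by simp
      qed
      have "(\<lambda>j. \<pi> (p (r j))) \<longlonglongrightarrow> \<pi> a"
        by (rule continuous_on_tendsto_compose[OF pic la aX]) (simp add: pX)
      moreover have "(\<lambda>j. \<pi> (q (r j))) \<longlonglongrightarrow> \<pi> b"
        by (rule continuous_on_tendsto_compose[OF pic lb bX]) (simp add: qX)
      ultimately have L: "(\<lambda>j. dist (\<pi> (p (r j))) (\<pi> (q (r j)))) \<longlonglongrightarrow> dist (\<pi> a) (\<pi> b)"
        by (rule tendsto_dist)
      have "eventually (\<lambda>j. dist (\<pi> (p (r j))) (\<pi> (q (r j))) \<le> e) sequentially"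
      proof (rule eventually_sequentiallyI[of K])
        fix j assume "K \<le> j"
        then have "K \<le> r j" using seq_suble[OF r, of j] by linarith
        then show "dist (\<pi> (p (r j))) (\<pi> (q (r j))) \<le> e" using ev by fastforce
      qed
      then show ?thesis using L tendsto_upperbound by fastforce
    qed
    then have "dist (\<pi> a) (\<pi> b) \<le> 0"
      by (rule field_le_epsilon) (use that_e in simp)
    then show ?thesis by simp
  qed
  have "proximal_pair T a b" using prox aX bX same unfolding proximal_factor_map_def by blast
  then have I: "(INF n. dist ((T ^^ n) a) ((T ^^ n) b)) = 0" unfolding proximal_pair_def .
  have "\<delta> \<le> (INF n. dist ((T ^^ n) a) ((T ^^ n) b))"
    by (rule cINF_greatest) (auto simp: sep)
  then show False using I d0 by simp
qed

end
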